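(* Let $n\ge3$. There exist vectors $a_1,\dots,a_n\in H_0$ with $a_1+\dots+a_n=0$ and $\mathrm{Span}\{a_i\}=H_0$ such that the polar dual (inside $H_0$) of $Root_n^a:=\mathrm{Conv}\{a_i-a_j:1\le i\ne j\le n\}$ is the polytope $$\Delta_{\mathcal F}=\sum_{i=1}^n[\hat e_i,\hat e_{i+1}]=\sum_{i=1}^n[0,\hat e_{i+1}-\hat e_i]\subset H_0,$$ where $\hat e_{n+1}:=\hat e_1$.
   Context: $H_0=\{x\in\mathbb{R}^n:\sum x_i=0\}$, $\hat e_i=e_i-\frac1n(e_1+\dots+e_n)$. Polar dual inside $H_0$: $K^\circ=\{y\in H_0:\langle y,x\rangle\le1\ \forall x\in K\}$. The polytope $\Delta_{\mathcal F}$ is the translate into $H_0$ of the Minkowski sum $\sum_{i=1}^n[e_i,e_{i+1}]$ associated to the hypergraph $\mathcal F=\{\{1,2\},\dots,\{n-1,n\},\{n,1\}\}$. *)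

theory Defs
  imports "HOL-Analysis.Analysis"
begin

text \<open>Coordinates are
identified with the indices 0..n-1 by an enumeration idx (a bijection
{..<n} -> UNIV); index i in the paper corresponds to idx (i-1).\<close>

definition H0 :: "(real^'n) set" where
  "H0 = {x. (\<Sum>j\<in>UNIV. x $ j) = 0}"

definition polar_H0 :: "(real^'n) set \<Rightarrow> (real^'n) set" where
  "polar_H0 K = {y \<in> H0. \<forall>x\<in>K. inner y x \<le> 1}"

definition ehat :: "'n \<Rightarrow> real^'n" where
  "ehat i = axis i 1 - (1 / real CARD('n)) *\<^sub>R (\<chi> j. 1)"

definition minkowski_sum :: "nat \<Rightarrow> (nat \<Rightarrow> (real^'n) set) \<Rightarrow> (real^'n) set" where
  "minkowski_sum m S = {(\<Sum>i<m. x i) | x. \<forall>i<m. x i \<in> S i}"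

definition Root_a :: "nat \<Rightarrow> (nat \<Rightarrow> real^'n) \<Rightarrow> (real^'n) set" where
  "Root_a m a = convex hull {a i - a j | i j. i < m \<and> j < m \<and> i \<noteq> j}"

end

theory Submission
  imports Defs
begin

lemma subspace_H0: "subspace (H0 :: (real^'n::finite) set)"
  unfolding subspace_def H0_def
  by (auto simp: sum.distrib sum_distrib_left[symmetric])

lemma card_pos': "0 < CARD('n::finite)" by simp

lemma ehat_H0: "ehat (i::'n::finite) \<in> H0"
proof -
  have "(\<Sum>j\<in>UNIV. ehat i $ j) = (\<Sum>j\<in>UNIV. (if j = i then 1 else 0) - 1 / real CARD('n))"
    by (auto simp: ehat_def axis_def intro!: sum.cong)
  also have "\<dots> = 0" by (simp add: sum_subtractf)
  finally show ?thesis by (simp add: H0_def)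
qed

lemma inner_ehat: assumes "y \<in> H0" shows "inner y (ehat (j::'n::finite)) = y $ j"
proof -
  have "inner y (ehat j) = (\<Sum>i\<in>UNIV. y $ i * ((if i = j then 1 else 0) - 1 / real CARD('n)))"
    unfolding inner_vec_def by (auto simp: ehat_def axis_def intro!: sum.cong)
  also have "\<dots> = y $ j - (\<Sum>i\<in>UNIV. y $ i) / real CARD('n)"
  proof -
    have "(\<Sum>i\<in>UNIV. y $ i * ((if i = j then 1 else 0) - 1 / real CARD('n)))
        = (\<Sum>i\<in>UNIV. (if i = j then y $ i else 0) - y $ i / real CARD('n))"
      by (rule sum.cong) (auto simp: algebra_simps)
    also have "\<dots> = y $ j - (\<Sum>i\<in>UNIV. y $ i) / real CARD('n)"
      by (simp add: sum_subtractf sum_divide_distrib)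
    finally show ?thesis .
  qed
  also have "\<dots> = y $ j" using assms by (simp add: H0_def)
  finally show ?thesis .
qed

lemma sum_ehat_all: "(\<Sum>j\<in>UNIV. ehat (j::'n::finite)) = 0"
proof -
  have "(\<Sum>j\<in>UNIV. ehat j) $ k = 0" for k :: 'n
  proof -
    have "(\<Sum>j\<in>UNIV. ehat j) $ k = (\<Sum>j\<in>UNIV. (if k = j then 1 else 0) - 1 / real CARD('n))"
      by (auto simp: ehat_def axis_def sum_component intro!: sum.cong)
    also have "\<dots> = 0" by (simp add: sum_subtractf)
    finally show ?thesis .
  qed
  then show ?thesis by (simp add: vec_eq_iff)
qed

lemma polar_hull: "polar_H0 (convex hull G) = {y\<in>H0. \<forall>g\<in>G. inner y g \<le> 1}"
proof -
  have "convex hull G \<subseteq> {x. inner y x \<le> 1}" if "\<forall>g\<in>G. inner y g \<le> 1" for y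
    by (rule hull_minimal) (use that convex_halfspace_le in auto)
  then show ?thesis unfolding polar_H0_def by (auto dest: hull_inc)
qed

lemma seg0: "closed_segment 0 b = {u *\<^sub>R b | u. 0 \<le> u \<and> u \<le> 1}"
  by (auto simp: closed_segment_def)

lemma mink_translate:
  "minkowski_sum m (\<lambda>i. (\<lambda>x. c i + x) ` S i) = (\<lambda>x. (\<Sum>i<m. c i) + x) ` minkowski_sum m S"
proof
  show "minkowski_sum m (\<lambda>i. (\<lambda>x. c i + x) ` S i) \<subseteq> (\<lambda>x. (\<Sum>i<m. c i) + x) ` minkowski_sum m S"
  proof
    fix v assume "v \<in> minkowski_sum m (\<lambda>i. (\<lambda>x. c i + x) ` S i)"
    then obtain x where x: "v = (\<Sum>i<m. x i)" "\<forall>i<m. x i \<in> (\<lambda>x. c i + x) ` S i"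
      unfolding minkowski_sum_def by blast
    then have "\<forall>i<m. x i - c i \<in> S i" by auto
    then have "(\<Sum>i<m. x i - c i) \<in> minkowski_sum m S" unfolding minkowski_sum_def by blast
    moreover have "v = (\<Sum>i<m. c i) + (\<Sum>i<m. x i - c i)" using x by (simp add: sum_subtractf)
    ultimately show "v \<in> (\<lambda>x. (\<Sum>i<m. c i) + x) ` minkowski_sum m S" by blast
  qed
next
  show "(\<lambda>x. (\<Sum>i<m. c i) + x) ` minkowski_sum m S \<subseteq> minkowski_sum m (\<lambda>i. (\<lambda>x. c i + x) ` S i)"
  proof
    fix v assume "v \<in> (\<lambda>x. (\<Sum>i<m. c i) + x) ` minkowski_sum m S"
    then obtain x where x: "v = (\<Sum>i<m. c i) + (\<Sum>i<m. x i)" "\<forall>i<m. x i \<in> S i"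
      unfolding minkowski_sum_def by blast
    then have "\<forall>i<m. c i + x i \<in> (\<lambda>x. c i + x) ` S i" by auto
    moreover have "v = (\<Sum>i<m. c i + x i)" using x by (simp add: sum.distrib)
    ultimately show "v \<in> minkowski_sum m (\<lambda>i. (\<lambda>x. c i + x) ` S i)"
      unfolding minkowski_sum_def by blast
  qed
qed

lemma mink_seg0:
  "v \<in> minkowski_sum m (\<lambda>i. closed_segment 0 (D i)) \<longleftrightarrow>
   (\<exists>t. (\<forall>i<m. 0 \<le> t i \<and> t i \<le> 1) \<and> v = (\<Sum>i<m. t i *\<^sub>R D i))"
proof
  assume "v \<in> minkowski_sum m (\<lambda>i. closed_segment 0 (D i))"
  then obtain x where x: "v = (\<Sum>i<m. x i)" "\<forall>i<m. \<exists>u. 0 \<le> u \<and> u \<le> 1 \<and> x i = u *\<^sub>R D i"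
    unfolding minkowski_sum_def seg0 by blast
  then obtain t where t: "\<forall>i<m. 0 \<le> t i \<and> t i \<le> 1 \<and> x i = t i *\<^sub>R D i" by metis
  then show "\<exists>t. (\<forall>i<m. 0 \<le> t i \<and> t i \<le> 1) \<and> v = (\<Sum>i<m. t i *\<^sub>R D i)"
    using x by (auto intro!: exI[of _ t] sum.cong)
next
  assume "\<exists>t. (\<forall>i<m. 0 \<le> t i \<and> t i \<le> 1) \<and> v = (\<Sum>i<m. t i *\<^sub>R D i)"
  then show "v \<in> minkowski_sum m (\<lambda>i. closed_segment 0 (D i))"
    unfolding minkowski_sum_def seg0 by blast
qed


definition prv :: "nat \<Rightarrow> nat \<Rightarrow> nat" where
  "prv n k = (if k = 0 then n - 1 else k - 1)"

definition Pv :: "(nat \<Rightarrow> 'n) \<Rightarrow> nat \<Rightarrow> real^'n::finite" where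
  "Pv idx i = (\<Sum>k<i. ehat (idx k))"

definition av :: "(nat \<Rightarrow> 'n) \<Rightarrow> nat \<Rightarrow> real^'n::finite" where
  "av idx i = Pv idx i - (1 / real CARD('n)) *\<^sub>R (\<Sum>j<CARD('n). Pv idx j)"

definition Ssum :: "(nat \<Rightarrow> 'n::finite) \<Rightarrow> real^'n \<Rightarrow> nat \<Rightarrow> real" where
  "Ssum idx y i = (\<Sum>k<i. y $ idx k)"

definition Dv :: "(nat \<Rightarrow> 'n) \<Rightarrow> nat \<Rightarrow> real^'n::finite" where
  "Dv idx i = ehat (idx (Suc i mod CARD('n))) - ehat (idx i)"

context
  fixes idx :: "nat \<Rightarrow> 'n::finite"
  assumes n3: "CARD('n) \<ge> 3"
    and bij: "bij_betw idx {..<CARD('n)} UNIV"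
begin

lemma sum_idx: "(\<Sum>k<CARD('n). f (idx k)) = (\<Sum>j\<in>UNIV. f j)"
  using sum.reindex_bij_betw[OF bij, of f] by simp

lemma idx_surj: "\<exists>k<CARD('n). j = idx k"
  using bij unfolding bij_betw_def by auto

lemma idx_inj: "k < CARD('n) \<Longrightarrow> l < CARD('n) \<Longrightarrow> idx k = idx l \<longleftrightarrow> k = l"
  using bij unfolding bij_betw_def inj_on_def by auto

lemma Pv_N: "Pv idx CARD('n) = 0"
  unfolding Pv_def using sum_idx[of ehat] sum_ehat_all by simp

lemma Pv_H0: "Pv idx i \<in> H0"
  unfolding Pv_def by (rule subspace_sum[OF subspace_H0]) (simp add: ehat_H0)

lemma av_H0: "av idx i \<in> H0"
  unfolding av_def
  by (intro subspace_diff[OF subspace_H0] Pv_H0 subspace_scale[OF subspace_H0]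
      subspace_sum[OF subspace_H0])

lemma av_diff: "av idx p - av idx q = Pv idx p - Pv idx q"
  unfolding av_def by simp

lemma Ssum_N: "y \<in> H0 \<Longrightarrow> Ssum idx y CARD('n) = 0"
  unfolding Ssum_def using sum_idx[of "\<lambda>j. y $ j"] by (simp add: H0_def)

lemma inner_Pv: "y \<in> H0 \<Longrightarrow> inner y (Pv idx p) = Ssum idx y p"
  unfolding Pv_def Ssum_def by (simp add: inner_sum_right inner_ehat)

lemma inner_av: "y \<in> H0 \<Longrightarrow> inner y (av idx p - av idx q) = Ssum idx y p - Ssum idx y q"
  by (simp add: av_diff inner_diff_right inner_Pv)

lemma polar_Q: "polar_H0 (Root_a CARD('n) (av idx)) =
   {y\<in>H0. \<forall>p<CARD('n). \<forall>q<CARD('n). p \<noteq> q \<longrightarrow> Ssum idx y p - Ssum idx y q \<le> 1}"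
  unfolding Root_a_def polar_hull
  apply (auto simp: inner_av)
  by (metis inner_av)

lemma suc_mod_eq: "i < CARD('n) \<Longrightarrow> k < CARD('n) \<Longrightarrow> (Suc i mod CARD('n) = k) \<longleftrightarrow> i = prv CARD('n) k"
  unfolding prv_def
  by (cases "Suc i = CARD('n)") auto

lemma Dv_comp: "k < CARD('n) \<Longrightarrow> (\<Sum>i<CARD('n). t i *\<^sub>R Dv idx i) $ idx k = t (prv CARD('n) k) - t k"
proof -
  assume k: "k < CARD('n)"
  have "(\<Sum>i<CARD('n). t i *\<^sub>R Dv idx i) $ idx k
      = (\<Sum>i<CARD('n). (if i = prv CARD('n) k then t i else 0) - (if i = k then t i else 0))"
  proof (subst sum_component, rule sum.cong)
    fix i assume i: "i \<in> {..<CARD('n)}"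
    have m: "Suc i mod CARD('n) < CARD('n)" using n3 by simp
    have "(t i *\<^sub>R Dv idx i) $ idx k = t i * ((if idx k = idx (Suc i mod CARD('n)) then 1 else 0)
          - (if idx k = idx i then 1 else 0))"
      by (simp add: Dv_def ehat_def axis_def algebra_simps)
    also have "\<dots> = (if i = prv CARD('n) k then t i else 0) - (if i = k then t i else 0)"
      using idx_inj[OF k m] idx_inj[OF k] i suc_mod_eq[of i k] k by auto
    finally show "(t i *\<^sub>R Dv idx i) $ idx k = (if i = prv CARD('n) k then t i else 0) - (if i = k then t i else 0)" .
  qed simp
  also have "\<dots> = t (prv CARD('n) k) - t k"
    using k n3 by (simp add: sum_subtractf prv_def) linarith
  finally show ?thesis .
qed


lemma prv_lt: "k < CARD('n) \<Longrightarrow> prv CARD('n) k < CARD('n)"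
  using n3 unfolding prv_def by auto

lemma Q_sub_P:
  assumes y: "y \<in> H0" and Q: "\<forall>p<CARD('n). \<forall>q<CARD('n). p \<noteq> q \<longrightarrow> Ssum idx y p - Ssum idx y q \<le> 1"
  shows "y \<in> minkowski_sum CARD('n) (\<lambda>i. closed_segment 0 (Dv idx i))"
proof -
  define N where "N = CARD('n)"
  have N3: "N \<ge> 3" using n3 N_def by simp
  define M where "M = Max (Ssum idx y ` {..<N})"
  have fin: "finite (Ssum idx y ` {..<N})" by simp
  have ne: "Ssum idx y ` {..<N} \<noteq> {}" using N3 by (simp add: lessThan_empty_iff)
  obtain p where p: "p < N" "M = Ssum idx y p" using Max_in[OF fin ne] M_def by auto
  have Q': "Ssum idx y a - Ssum idx y b \<le> 1" if "a < N" "b < N" for a b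
    using Q that N_def by (cases "a = b") auto
  have red: "\<exists>j'<N. Ssum idx y j = Ssum idx y j'" if "j \<le> N" for j
  proof (cases "j = N")
    case True then show ?thesis using Ssum_N[OF y] N3 N_def by (intro exI[of _ 0]) (auto simp: Ssum_def)
  next
    case False then show ?thesis using that by (intro exI[of _ j]) auto
  qed
  define t where "t i = M - Ssum idx y (Suc i)" for i
  have tb: "0 \<le> t i \<and> t i \<le> 1" if iN: "i < N" for i
  proof -
    obtain j' where j': "j' < N" "Ssum idx y (Suc i) = Ssum idx y j'" using red[of "Suc i"] iN by auto
    have "Ssum idx y j' \<le> M" unfolding M_def using j' fin by auto
    moreover have "M - Ssum idx y j' \<le> 1" using Q'[OF p(1) j'(1)] p by simp
    ultimately show ?thesis using j' unfolding t_def by simp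
  qed
  have eq: "y = (\<Sum>i<N. t i *\<^sub>R Dv idx i)"
  proof (subst vec_eq_iff, rule allI)
    fix j
    obtain k where k: "k < N" "j = idx k" using idx_surj N_def by auto
    have "(\<Sum>i<N. t i *\<^sub>R Dv idx i) $ idx k = t (prv N k) - t k"
      using Dv_comp k N_def by simp
    also have "\<dots> = Ssum idx y (Suc k) - Ssum idx y (Suc (prv N k))"
      unfolding t_def by simp
    also have "\<dots> = y $ idx k"
    proof (cases "k = 0")
      case True
      then have "Suc (prv N k) = N" using N3 unfolding prv_def by simp
      then show ?thesis using True Ssum_N[OF y] N_def by (simp add: Ssum_def)
    next
      case False
      then have "Suc (prv N k) = k" unfolding prv_def by simp
      then show ?thesis by (simp add: Ssum_def)
    qed
    finally show "y $ j = (\<Sum>i<N. t i *\<^sub>R Dv idx i) $ j" using k by simp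
  qed
  show ?thesis unfolding mink_seg0 using tb eq N_def by blast
qed

lemma P_sub_Q:
  assumes t: "\<forall>i<CARD('n). 0 \<le> t i \<and> t i \<le> 1" and y: "y = (\<Sum>i<CARD('n). t i *\<^sub>R Dv idx i)"
  shows "y \<in> H0" "\<forall>p<CARD('n). \<forall>q<CARD('n). p \<noteq> q \<longrightarrow> Ssum idx y p - Ssum idx y q \<le> 1"
proof -
  show "y \<in> H0" unfolding y Dv_def
    by (intro subspace_sum[OF subspace_H0] subspace_scale[OF subspace_H0]
        subspace_diff[OF subspace_H0] ehat_H0)
  have S: "i < CARD('n) \<Longrightarrow> Ssum idx y i = t (CARD('n) - 1) - t (prv CARD('n) i)" for i
  proof (induction i)
    case 0 then show ?case by (simp add: Ssum_def prv_def)
  next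
    case (Suc i)
    have "Ssum idx y (Suc i) = Ssum idx y i + y $ idx i" by (simp add: Ssum_def)
    also have "\<dots> = t (CARD('n) - 1) - t i"
      using Suc Dv_comp[of i t] y by simp
    finally show ?case by (simp add: prv_def)
  qed
  show "\<forall>p<CARD('n). \<forall>q<CARD('n). p \<noteq> q \<longrightarrow> Ssum idx y p - Ssum idx y q \<le> 1"
  proof (intro allI impI)
    fix p q assume pq: "p < CARD('n)" "q < CARD('n)" "p \<noteq> q"
    have "0 \<le> t (prv CARD('n) p)" "t (prv CARD('n) q) \<le> 1" using t prv_lt pq by auto
    then show "Ssum idx y p - Ssum idx y q \<le> 1" using S pq by simp
  qed
qed

lemma polar_P: "polar_H0 (Root_a CARD('n) (av idx)) = minkowski_sum CARD('n) (\<lambda>i. closed_segment 0 (Dv idx i))"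
  unfolding polar_Q
  using Q_sub_P P_sub_Q by (auto simp: mink_seg0)

lemma P1_P2: "minkowski_sum CARD('n) (\<lambda>i. closed_segment (ehat (idx i)) (ehat (idx (Suc i mod CARD('n)))))
  = minkowski_sum CARD('n) (\<lambda>i. closed_segment 0 (Dv idx i))"
proof -
  have "closed_segment (ehat (idx i)) (ehat (idx (Suc i mod CARD('n))))
      = (\<lambda>x. ehat (idx i) + x) ` closed_segment 0 (Dv idx i)" for i
    using closed_segment_translation[of "ehat (idx i)" 0 "Dv idx i"] by (simp add: Dv_def)
  then have "minkowski_sum CARD('n) (\<lambda>i. closed_segment (ehat (idx i)) (ehat (idx (Suc i mod CARD('n)))))
     = (\<lambda>x. (\<Sum>i<CARD('n). ehat (idx i)) + x) ` minkowski_sum CARD('n) (\<lambda>i. closed_segment 0 (Dv idx i))"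
    by (simp add: mink_translate)
  also have "(\<Sum>i<CARD('n). ehat (idx i)) = 0" using sum_idx[of ehat] sum_ehat_all by simp
  finally show ?thesis by simp
qed

lemma sum_av: "(\<Sum>i<CARD('n). av idx i) = 0"
  unfolding av_def sum_subtractf sum_constant_scaleR by simp

lemma ehat_span: "ehat j \<in> span (av idx ` {..<CARD('n)})"
proof -
  obtain k where k: "k < CARD('n)" "j = idx k" using idx_surj by auto
  show ?thesis
  proof (cases "Suc k < CARD('n)")
    case True
    have "ehat j = av idx (Suc k) - av idx k" using k by (simp add: av_diff Pv_def)
    moreover have "av idx (Suc k) \<in> span (av idx ` {..<CARD('n)})" by (rule span_base) (use True in auto)
    moreover have "av idx k \<in> span (av idx ` {..<CARD('n)})" by (rule span_base) (use k in auto)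
    ultimately show ?thesis by (simp add: span_diff)
  next
    case False
    then have kN: "Suc k = CARD('n)" using k by simp
    have "Pv idx (Suc k) = 0" using kN Pv_N by simp
    then have "ehat j = av idx 0 - av idx k" using k by (simp add: av_diff Pv_def eq_neg_iff_add_eq_0 add.commute)
    moreover have "av idx 0 \<in> span (av idx ` {..<CARD('n)})" by (rule span_base) (use k in auto)
    moreover have "av idx k \<in> span (av idx ` {..<CARD('n)})" by (rule span_base) (use k in auto)
    ultimately show ?thesis by (simp add: span_diff)
  qed
qed

lemma span_av: "span (av idx ` {..<CARD('n)}) = H0"
proof
  show "span (av idx ` {..<CARD('n)}) \<subseteq> H0"
    by (rule span_minimal[OF _ subspace_H0]) (auto simp: av_H0)
next
  show "H0 \<subseteq> span (av idx ` {..<CARD('n)})"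
  proof
    fix x :: "real^'n" assume x: "x \<in> H0"
    have "x = (\<Sum>j\<in>UNIV. x $ j *\<^sub>R ehat j)"
    proof (subst vec_eq_iff, rule allI)
      fix i
      have "(\<Sum>j\<in>UNIV. x $ j *\<^sub>R ehat j) $ i
          = (\<Sum>j\<in>UNIV. (if j = i then x $ j else 0) - x $ j / real CARD('n))"
        by (auto simp: sum_component ehat_def axis_def algebra_simps intro!: sum.cong)
      also have "\<dots> = x $ i - (\<Sum>j\<in>UNIV. x $ j) / real CARD('n)"
        by (simp add: sum_subtractf sum_divide_distrib)
      also have "\<dots> = x $ i" using x by (simp add: H0_def)
      finally show "x $ i = (\<Sum>j\<in>UNIV. x $ j *\<^sub>R ehat j) $ i" by simp
    qed
    also have "\<dots> \<in> span (av idx ` {..<CARD('n)})"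
      by (intro span_sum span_mul ehat_span)
    finally show "x \<in> span (av idx ` {..<CARD('n)})" .
  qed
qed

end

theorem mainTheorem11:
  fixes idx :: "nat \<Rightarrow> 'n::finite"
  assumes "CARD('n) \<ge> 3"
    and "bij_betw idx {..<CARD('n)} UNIV"
  shows "\<exists>a :: nat \<Rightarrow> real^'n.
           (\<forall>i<CARD('n). a i \<in> H0) \<and>
           (\<Sum>i<CARD('n). a i) = 0 \<and>
           span (a ` {..<CARD('n)}) = H0 \<and>
           polar_H0 (Root_a CARD('n) a) =
             minkowski_sum CARD('n)
               (\<lambda>i. closed_segment (ehat (idx i)) (ehat (idx (Suc i mod CARD('n))))) \<and>
           polar_H0 (Root_a CARD('n) a) =
             minkowski_sum CARD('n)
               (\<lambda>i. closed_segment 0 (ehat (idx (Suc i mod CARD('n))) - ehat (idx i)))"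
  apply (rule exI[of _ "av idx"])
  using av_H0[OF assms] sum_av[OF assms] span_av[OF assms] polar_P[OF assms] P1_P2[OF assms]
  by (simp add: Dv_def)

end
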